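(* Let $\mathbb{F}_q$ be a finite field with $q\neq 2$ and let $\mathcal{M}=\mathbb{F}_q\times\mathbb{F}_q^{*}\times\mathbb{F}_q$ with the relation: $(x_1,y_1,z_1)$ and $(x_2,y_2,z_2)$ commute iff $x_1y_2-y_1x_2=z_1-z_2$. Then $\omega(\mathcal{M})\ge 2q$.
   Context: $\omega(\mathcal{M})$ is the maximum cardinality of a subset of $\mathcal{M}$ no two distinct elements of which commute. *)

theory Defs
  imports Main
begin

definition omega :: "('b \<Rightarrow> 'b \<Rightarrow> bool) \<Rightarrow> 'b set \<Rightarrow> nat" where
  "omega comm X = Max {card S | S. S \<subseteq> X \<and> (\<forall>a\<in>S. \<forall>b\<in>S. a \<noteq> b \<longrightarrow> \<not> comm a b)}"

definition Mset :: "('a::field \<times> 'a \<times> 'a) set" where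
  "Mset = {(x, y, z). y \<noteq> 0}"

definition mcomm :: "('a::field \<times> 'a \<times> 'a) \<Rightarrow> ('a \<times> 'a \<times> 'a) \<Rightarrow> bool" where
  "mcomm p1 p2 = (case p1 of (x1, y1, z1) \<Rightarrow> case p2 of (x2, y2, z2) \<Rightarrow>
      x1 * y2 - y1 * x2 = z1 - z2)"

end

theory Submission
  imports Defs
begin

theorem lemma6p3:
  assumes "card (UNIV :: 'a::{field, finite} set) \<noteq> 2"
  shows "2 * card (UNIV :: 'a set) \<le> omega mcomm (Mset :: ('a \<times> 'a \<times> 'a) set)"
proof -
  obtain c :: 'a where c0: "c \<noteq> 0" and c1: "c \<noteq> 1"
  proof -
    have "\<exists>c::'a. c \<noteq> 0 \<and> c \<noteq> 1"
    proof (rule ccontr)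
      assume "\<not> ?thesis"
      then have "(UNIV :: 'a set) = {0, 1}" by auto
      then have "card (UNIV :: 'a set) = 2" by (metis card_2_iff zero_neq_one)
      with assms show False by simp
    qed
    then show ?thesis using that by blast
  qed
  define A where "A = (\<lambda>a::'a. (a, 1::'a, a * c)) ` UNIV"
  define B where "B = (\<lambda>b::'a. (b, c, b - 1)) ` UNIV"
  have cA: "card A = card (UNIV :: 'a set)"
    unfolding A_def by (rule card_image) (auto simp: inj_on_def)
  have cB: "card B = card (UNIV :: 'a set)"
    unfolding B_def by (rule card_image) (auto simp: inj_on_def)
  have disj: "A \<inter> B = {}" using c1 by (auto simp: A_def B_def)
  have cS: "card (A \<union> B) = 2 * card (UNIV :: 'a set)"
    using card_Un_disjoint[OF _ _ disj] cA cB by simp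
  have sub: "A \<union> B \<subseteq> Mset" using c0 by (auto simp: A_def B_def Mset_def)
  have nc: "\<forall>p\<in>A \<union> B. \<forall>q\<in>A \<union> B. p \<noteq> q \<longrightarrow> \<not> mcomm p q"
  proof (intro ballI impI)
    fix p q assume p: "p \<in> A \<union> B" and q: "q \<in> A \<union> B" and ne: "p \<noteq> q"
    show "\<not> mcomm p q"
    proof -
      { fix a b :: 'a assume "a \<noteq> b" "a - b = a * c - b * c"
        then have "(a - b) * (1 - c) = 0" by (simp add: algebra_simps)
        with \<open>a \<noteq> b\<close> c1 have False by simp }
      note X = this
      { fix a b :: 'a assume "a \<noteq> b" "a * c - c * b = a - 1 - (b - 1)"
        then have "(a - b) * (c - 1) = 0" by (simp add: algebra_simps)
        with \<open>a \<noteq> b\<close> c1 have False by simp }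
      note Y = this
      from p q consider
          (AA) a b where "p = (a, 1, a * c)" "q = (b, 1, b * c)"
        | (AB) a b where "p = (a, 1, a * c)" "q = (b, c, b - 1)"
        | (BA) a b where "p = (b, c, b - 1)" "q = (a, 1, a * c)"
        | (BB) a b where "p = (a, c, a - 1)" "q = (b, c, b - 1)"
        unfolding A_def B_def by blast
      then show ?thesis
      proof cases
        case AA then show ?thesis using ne X[of a b] by (auto simp: mcomm_def)
      next
        case BB then show ?thesis using ne Y[of a b] by (auto simp: mcomm_def)
      next
        case AB then show ?thesis by (auto simp: mcomm_def algebra_simps)
      next
        case BA then show ?thesis by (auto simp: mcomm_def algebra_simps)
      qed
    qed
  qed
  let ?K = "{card S | S. S \<subseteq> (Mset :: ('a \<times> 'a \<times> 'a) set) \<and> (\<forall>a\<in>S. \<forall>b\<in>S. a \<noteq> b \<longrightarrow> \<not> mcomm a b)}"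
  have fin: "finite ?K"
  proof (rule finite_subset)
    show "?K \<subseteq> {..card (UNIV :: ('a \<times> 'a \<times> 'a) set)}"
      by (auto intro: card_mono)
  qed simp
  have "card (A \<union> B) \<in> ?K" using sub nc by blast
  then have "card (A \<union> B) \<le> Max ?K" using fin by (rule Max_ge[rotated])
  then show ?thesis unfolding omega_def cS .
qed

end
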